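(* Let $d\geq 2$, let $t\geq 2$ be an integer and $0\leq\epsilon<1$. Let $U$ be a $d\times d$ unitary matrix distributed according to an $\epsilon$-approximate unitary $t$-design. Then for any unit vectors $|\alpha\rangle,|\beta\rangle\in\mathbb{C}^d$ and any constant $0\leq\gamma\leq1-\epsilon$, $$\Pr_U\left[|\langle\alpha|U|\beta\rangle|^2>\frac{\gamma}{d}\right]\geq\frac{(1-\epsilon-\gamma)^2}{2(1+\epsilon)}.$$
   Context: A distribution $\{p_i,U_i\}$ over $d\times d$ unitaries is an $\epsilon$-approximate unitary $t$-design if for every polynomial $f$ homogeneous of degree $t$ in the entries of $U$ and homogeneous of degree $t$ in the entries of $U^*$, $(1-\epsilon)\int_{\mathrm{U}(d)}f(U)\,dU\leq\sum_ip_if(U_i)\leq(1+\epsilon)\int_{\mathrm{U}(d)}f(U)\,dU$, with $dU$ the Haar measure on $\mathrm{U}(d)$. *)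

theory Defs
  imports "HOL-Probability.Probability"
begin

text \<open>Conjugate transpose and unitary d x d matrices (d = CARD('n)).\<close>

definition adjoint_mat :: "complex^'n^'n \<Rightarrow> complex^'n^'n" where
  "adjoint_mat U = (\<chi> i j. cnj (U $ j $ i))"

definition unitary_mat :: "complex^'n^'n \<Rightarrow> bool" where
  "unitary_mat U \<longleftrightarrow> adjoint_mat U ** U = mat 1 \<and> U ** adjoint_mat U = mat 1"

definition unitary_group :: "(complex^'n::finite^'n) set" where
  "unitary_group = {U. unitary_mat U}"

text \<open>H is the Haar measure on U(d): a Borel probability measure on d x d complex
  matrices concentrated on U(d) and invariant under left and right multiplication
  by unitaries (this characterises the Haar measure uniquely).\<close>

definition is_haar_measure :: "(complex^'n::finite^'n) measure \<Rightarrow> bool" where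
  "is_haar_measure H \<longleftrightarrow>
     prob_space H \<and> sets H = sets borel \<and> emeasure H unitary_group = 1 \<and>
     (\<forall>V \<in> unitary_group. distr H borel (\<lambda>U. V ** U) = H \<and> distr H borel (\<lambda>U. U ** V) = H)"

text \<open>Polynomials homogeneous of degree t in the entries of U and homogeneous of
  degree t in the entries of U^* (i.e. in the conjugates of the entries of U):
  arbitrary complex linear combinations of the monomials
  U_{a1} ... U_{at} * conj(U_{b1}) ... conj(U_{bt}).\<close>

definition bihom_poly :: "nat \<Rightarrow> (complex^'n::finite^'n \<Rightarrow> complex) \<Rightarrow> bool" where
  "bihom_poly t f \<longleftrightarrow>
     (\<exists>c :: ('n \<times> 'n) list \<Rightarrow> ('n \<times> 'n) list \<Rightarrow> complex.
        f = (\<lambda>U. \<Sum>a\<in>{xs. length xs = t}. \<Sum>b\<in>{xs. length xs = t}.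
               c a b * (\<Prod>k<t. U $ fst (a!k) $ snd (a!k))
                     * (\<Prod>k<t. cnj (U $ fst (b!k) $ snd (b!k)))))"

definition approx_design ::
  "(complex^'n::finite^'n) measure \<Rightarrow> real \<Rightarrow> nat \<Rightarrow> (complex^'n^'n) pmf \<Rightarrow> bool" where
  "approx_design H \<epsilon> t D \<longleftrightarrow>
     set_pmf D \<subseteq> unitary_group \<and>
     (\<forall>f. bihom_poly t f \<and> (\<forall>U\<in>unitary_group. f U \<in> \<real> \<and> 0 \<le> Re (f U)) \<longrightarrow>
        (1 - \<epsilon>) * (\<integral>U. Re (f U) \<partial>H) \<le> measure_pmf.expectation D (\<lambda>U. Re (f U)) \<and>
        measure_pmf.expectation D (\<lambda>U. Re (f U)) \<le> (1 + \<epsilon>) * (\<integral>U. Re (f U) \<partial>H))"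

definition bra_ket :: "complex^'n \<Rightarrow> complex^'n^'n \<Rightarrow> complex^'n \<Rightarrow> complex" where
  "bra_ket \<alpha> U \<beta> = (\<Sum>i\<in>UNIV. cnj (\<alpha> $ i) * (U *v \<beta>) $ i)"

end

theory Submission
  imports Defs
begin


definition ip :: "complex^'n \<Rightarrow> complex^'n \<Rightarrow> complex" where
  "ip x y = (\<Sum>i\<in>UNIV. cnj (x$i) * y$i)"

lemma bra_ket_ip: "bra_ket a U b = ip a (U *v b)"
  by (simp add: bra_ket_def ip_def)

lemma norm_sq_vec: "(norm (x::complex^'n))^2 = (\<Sum>i\<in>UNIV. (cmod (x$i))^2)"
  unfolding norm_vec_def L2_set_def by (simp add: sum_nonneg)

lemma ip_self: "ip x x = of_real ((norm x)^2)"
  unfolding norm_sq_vec ip_def of_real_sum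
  by (intro sum.cong refl) (metis complex_norm_square mult.commute)

lemma ip_cnj: "ip y x = cnj (ip x y)"
  unfolding ip_def by (simp add: mult.commute)

lemma ip_adj: "ip x (A *v y) = ip (adjoint_mat A *v x) y"
proof -
  have 1: "ip x (A *v y) = (\<Sum>i\<in>UNIV. \<Sum>j\<in>UNIV. cnj (x$i) * (A$i$j * y$j))"
    by (simp add: ip_def matrix_vector_mult_def sum_distrib_left)
  have 2: "ip (adjoint_mat A *v x) y = (\<Sum>j\<in>UNIV. \<Sum>i\<in>UNIV. cnj (x$i) * (A$i$j * y$j))"
    by (simp add: ip_def adjoint_mat_def matrix_vector_mult_def sum_distrib_left sum_distrib_right mult_ac)
  show ?thesis unfolding 1 2 by (rule sum.swap)
qed

lemma ip_add1: "ip (x + y) z = ip x z + ip y z"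
  unfolding ip_def by (simp add: sum.distrib algebra_simps)
lemma ip_diff1: "ip (x - y) z = ip x z - ip y z"
  unfolding ip_def by (simp add: sum_subtractf algebra_simps)
lemma ip_add2: "ip z (x + y) = ip z x + ip z y"
  unfolding ip_def by (simp add: sum.distrib algebra_simps)
lemma ip_diff2: "ip z (x - y) = ip z x - ip z y"
  unfolding ip_def by (simp add: sum_subtractf algebra_simps)
lemma ip_smult1: "ip (c *s x) z = cnj c * ip x z"
  unfolding ip_def by (simp add: sum_distrib_left algebra_simps)
lemma ip_smult2: "ip z (c *s x) = c * ip z x"
  unfolding ip_def by (simp add: sum_distrib_left algebra_simps)
lemma ip_axis1: "ip (axis i 1) y = y $ i"
proof -
  have "(\<lambda>j. cnj ((axis i 1) $ j) * y $ j) = (\<lambda>j. if j = i then y$i else 0)"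
    by (auto simp: axis_def)
  then show ?thesis unfolding ip_def by (simp only:) simp
qed
lemma ip_axis2: "ip y (axis i 1) = cnj (y $ i)"
  by (metis ip_cnj ip_axis1)

lemma norm_eq_ip: "norm x = norm y \<longleftrightarrow> ip x x = ip (y::complex^'n) y"
  unfolding ip_self of_real_eq_iff by (metis norm_ge_zero power2_eq_iff_nonneg)

lemma unitary_ip: assumes "unitary_mat U" shows "ip (U *v x) (U *v y) = ip x y"
  using assms unfolding unitary_mat_def
  by (simp add: ip_adj[of "U *v x"] matrix_vector_mul_assoc)

lemma adjoint_mat_1: "adjoint_mat (mat 1 :: complex^'n^'n) = mat 1"
  by (simp add: adjoint_mat_def mat_def vec_eq_iff)

lemma unitary_mat_1: "unitary_mat (mat 1 :: complex^'n^'n)"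
  by (simp add: unitary_mat_def adjoint_mat_1 matrix_mul_lid)

lemma householder:
  fixes a a' :: "complex^'n"
  assumes na: "norm a = 1" and na': "norm a' = 1"
  shows "\<exists>V c. unitary_mat V \<and> cmod c = 1 \<and> adjoint_mat V *v a = c *s a'"
proof -
  define p where "p = ip a' a"
  define c where "c = (if p = 0 then 1 else p / of_real (cmod p))"
  have c1: "cmod c = 1" unfolding c_def by (simp add: norm_divide)
  have cp: "cnj c * p = of_real (cmod p)"
  proof (cases "p = 0")
    case False
    then show ?thesis unfolding c_def
      by (simp add: complex_norm_square power2_eq_square field_simps)
         (metis complex_norm_square mult.commute power2_eq_square of_real_mult)
  qed (simp add: c_def)
  have cc: "c * cnj c = 1" using c1 by (metis complex_norm_square of_real_1 power_one)
  have aa: "ip a a = 1" and aa': "ip a' a' = 1" using na na' by (simp_all add: ip_self)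
  define w where "w = a - c *s a'"
  have wa: "ip w a = 1 - of_real (cmod p)"
    unfolding w_def ip_diff1 ip_smult1 aa p_def[symmetric] cp ..
  have wa': "ip w a' = cnj p - cnj c"
    unfolding w_def ip_diff1 ip_smult1 aa' p_def using ip_cnj by simp
  have cpc: "c * cnj p = of_real (cmod p)" using cp by (metis complex_cnj_cnj complex_cnj_mult complex_cnj_complex_of_real)
  have ww: "ip w w = 2 * ip w a"
  proof -
    have "ip w w = ip w (a - c *s a')" unfolding w_def[symmetric] ..
    also have "\<dots> = ip w a - c * ip w a'" by (simp only: ip_diff2 ip_smult2)
    also have "\<dots> = (1 - of_real (cmod p)) - (c * cnj p - c * cnj c)" unfolding wa wa' by (simp add: algebra_simps)
    also have "\<dots> = 2 * ip w a" unfolding cpc cc wa by simp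
    finally show ?thesis .
  qed
  show ?thesis
  proof (cases "w = 0")
    case True
    then have "a = c *s a'" unfolding w_def by simp
    then show ?thesis using unitary_mat_1 c1
      by (intro exI[of _ "mat 1"] exI[of _ c]) (simp add: adjoint_mat_1 matrix_vector_mul_lid)
  next
    case False
    then have nw: "norm w \<noteq> 0" by simp
    define k where "k = complex_of_real (2 / (norm w)^2)"
    have kw: "k * ip w w = 2" unfolding k_def ip_self using nw
      by (simp flip: of_real_mult)
    have kwa: "k * ip w a = 1" using kw ww by simp
    define V :: "complex^'n^'n" where "V = (\<chi> i j. (if i = j then 1 else 0) - k * w$i * cnj (w$j))"
    have ck: "cnj k = k" unfolding k_def by simp
    have adjV: "adjoint_mat V = V"
      unfolding V_def adjoint_mat_def by (simp add: vec_eq_iff ck mult_ac)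
    have e: "((if i = m then 1 else 0) - k * w$i * cnj (w$m)) * ((if m = j then 1 else 0) - k * w$m * cnj (w$j))
       = (if m = i then ((if i = j then 1 else 0) - k*w$i*cnj (w$j)) else 0) - (if m = j then k * w$i * cnj (w$j) else 0)
         + (k*k*w$i*cnj (w$j)) * (cnj (w$m) * w$m)" for i j m
      by (cases "m = i"; cases "m = j"; simp add: right_diff_distrib left_diff_distrib mult_ac)
    have VV: "V ** V = mat 1"
    proof -
      have "(\<Sum>m\<in>UNIV. ((if i = m then 1 else 0) - k * w$i * cnj (w$m)) * ((if m = j then 1 else 0) - k * w$m * cnj (w$j)))
          = (if i = j then 1 else 0)" for i j
      proof -
        have "(\<Sum>m\<in>UNIV. ((if i = m then 1 else 0) - k * w$i * cnj (w$m)) * ((if m = j then 1 else 0) - k * w$m * cnj (w$j)))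
          = ((if i = j then 1 else 0) - k*w$i*cnj (w$j)) - k * w$i * cnj (w$j) + (k*k*w$i*cnj (w$j)) * ip w w"
          unfolding e sum.distrib sum_subtractf ip_def sum_distrib_left[symmetric] by simp
        also have "\<dots> = (if i = j then 1 else 0) + k*w$i*cnj (w$j) * (k * ip w w - 2)"
          by (simp add: algebra_simps)
        finally show ?thesis using kw by simp
      qed
      then show ?thesis unfolding V_def matrix_matrix_mult_def mat_def by (simp add: vec_eq_iff)
    qed
    have Va: "V *v a = c *s a'"
    proof -
      have "(V *v a)$i = a$i - w$i" for i
      proof -
        have "(V *v a)$i = (\<Sum>j\<in>UNIV. (if i = j then a$j else 0) - k * w$i * (cnj (w$j) * a$j))"
          unfolding V_def matrix_vector_mult_def by (simp add: algebra_simps, intro sum.cong, auto)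
        also have "\<dots> = a$i - k * w$i * ip w a"
          unfolding sum_subtractf ip_def sum_distrib_left[symmetric] by simp
        finally show ?thesis using kwa by (simp add: mult_ac)
      qed
      then show ?thesis unfolding w_def by (simp add: vec_eq_iff)
    qed
    show ?thesis
      by (intro exI[of _ V] exI[of _ c]) (simp add: unitary_mat_def adjV VV Va c1)
  qed
qed

lemma bk_mult: "bra_ket a (V ** U) b = bra_ket (adjoint_mat V *v a) U b"
  by (simp add: bra_ket_ip ip_adj matrix_vector_mul_assoc[symmetric])

lemma bk_smult: "bra_ket (c *s a) U b = cnj c * bra_ket a U b"
  by (simp add: bra_ket_ip ip_smult1)

lemma bk_axis: "bra_ket (axis i 1) U b = (U *v b) $ i"
  by (simp add: bra_ket_ip ip_axis1)

lemma cont_bk: "continuous_on UNIV (\<lambda>U::complex^'n^'n. bra_ket a U b)"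
  unfolding bra_ket_def matrix_vector_mult_def by (simp, intro continuous_intros)

lemma unitary_norm: assumes "unitary_mat U" shows "norm (U *v x) = norm x"
  using unitary_ip[OF assms] norm_eq_ip by blast

lemma bk_bound:
  fixes U :: "complex^'n::finite^'n"
  assumes "unitary_mat U"
  shows "cmod (bra_ket a U b) \<le> real CARD('n) * norm a * norm b"
proof -
  have "cmod (bra_ket a U b) \<le> (\<Sum>i\<in>UNIV. cmod (cnj (a$i) * (U *v b)$i))"
    unfolding bra_ket_def by (rule norm_sum)
  also have "\<dots> \<le> (\<Sum>i\<in>(UNIV::'n set). norm a * norm b)"
  proof (rule sum_mono)
    fix i
    have "cmod (cnj (a$i) * (U *v b)$i) = cmod (a$i) * cmod ((U *v b)$i)" by (simp add: norm_mult)
    also have "\<dots> \<le> norm a * norm (U *v b)"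
      by (intro mult_mono) (auto simp: Finite_Cartesian_Product.norm_nth_le)
    finally show "cmod (cnj (a$i) * (U *v b)$i) \<le> norm a * norm b" using unitary_norm[OF assms] by simp
  qed
  finally show ?thesis by simp
qed

lemma haar_facts:
  assumes "is_haar_measure H"
  shows "prob_space H" "sets H = sets borel" "AE U in H. U \<in> unitary_group"
proof -
  show P: "prob_space H" and S: "sets H = sets borel" using assms unfolding is_haar_measure_def by auto
  have "emeasure H unitary_group = 1" using assms unfolding is_haar_measure_def by auto
  then have "measure H unitary_group = 1" by (simp add: measure_def)
  then show "AE U in H. U \<in> unitary_group" using prob_space.AE_prob_1[OF P] by blast
qed

lemma haar_meas:
  assumes "is_haar_measure H" "continuous_on UNIV F"
  shows "F \<in> borel_measurable H"
  using borel_measurable_continuous_onI[OF assms(2)] measurable_cong_sets[OF haar_facts(2)[OF assms(1)] refl]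
  by blast

lemma haar_int:
  fixes F :: "complex^'n::finite^'n \<Rightarrow> real"
  assumes "is_haar_measure H" "continuous_on UNIV F" "\<And>U. unitary_mat U \<Longrightarrow> \<bar>F U\<bar> \<le> B"
  shows "integrable H F"
proof -
  interpret prob_space H using haar_facts[OF assms(1)] by simp
  show ?thesis
  proof (rule integrable_const_bound[where B=B])
    show "AE x in H. norm (F x) \<le> B" using haar_facts(3)[OF assms(1)]
      by eventually_elim (use assms(3) in \<open>auto simp: unitary_group_def\<close>)
  qed (rule haar_meas[OF assms(1,2)])
qed

lemma haar_left:
  fixes F :: "complex^'n::finite^'n \<Rightarrow> real"
  assumes H: "is_haar_measure H" and V: "V \<in> unitary_group" and F: "continuous_on UNIV F"
  shows "(\<integral>U. F (V ** U) \<partial>H) = (\<integral>U. F U \<partial>H)"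
proof -
  have eq: "distr H borel (\<lambda>U. V ** U) = H" using H V unfolding is_haar_measure_def by auto
  have c: "continuous_on UNIV (\<lambda>U::complex^'n^'n. V ** U)"
    unfolding matrix_matrix_mult_def by (intro continuous_intros)
  have g: "(\<lambda>U. V ** U) \<in> measurable H borel"
    using haar_meas[OF H c] .
  have "(\<integral>U. F U \<partial>H) = (\<integral>U. F U \<partial>(distr H borel (\<lambda>U. V ** U)))" by (simp only: eq)
  also have "\<dots> = (\<integral>U. F (V ** U) \<partial>H)"
    by (rule integral_distr[OF g borel_measurable_continuous_onI[OF F]])
  finally show ?thesis ..
qed

lemma moment_inv:
  assumes H: "is_haar_measure H" and na: "norm a = 1" and na': "norm a' = 1"
  shows "(\<integral>U. (cmod (bra_ket a U b))^k \<partial>H) = (\<integral>U. (cmod (bra_ket a' U b))^k \<partial>H)"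
proof -
  obtain V c where V: "unitary_mat V" and c: "cmod c = 1" and Va: "adjoint_mat V *v a = c *s a'"
    using householder[OF na na'] by blast
  have "(\<integral>U. (cmod (bra_ket a U b))^k \<partial>H) = (\<integral>U. (cmod (bra_ket a (V ** U) b))^k \<partial>H)"
    by (rule haar_left[OF H, symmetric]) (use V in \<open>auto simp: unitary_group_def intro!: continuous_intros cont_bk\<close>)
  also have "\<dots> = (\<integral>U. (cmod (bra_ket a' U b))^k \<partial>H)"
    unfolding bk_mult Va bk_smult by (simp add: norm_mult c)
  finally show ?thesis .
qed

lemma cmod4: "(cmod w)^4 = ((Re w)^2 + (Im w)^2)^2"
  by (metis cmod_power2 power_mult num_double numeral_times_numeral mult_2)

lemma four_id_gen:
  fixes z y :: complex and r :: real
  shows "(cmod (cnj (of_real r) * z + cnj (1 * of_real r) * y))^4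
       + (cmod (cnj (of_real r) * z + cnj (\<i> * of_real r) * y))^4
       + (cmod (cnj (of_real r) * z + cnj (-1 * of_real r) * y))^4
       + (cmod (cnj (of_real r) * z + cnj (-\<i> * of_real r) * y))^4
     = 4 * r^4 * (((cmod z)^2 + (cmod y)^2)^2 + 2 * (cmod z)^2 * (cmod y)^2)"
  unfolding cmod4 cmod_power2 by (simp add: algebra_simps power2_eq_square power4_eq_xxxx)

lemma four_id:
  fixes z y :: complex
  defines "s \<equiv> complex_of_real (1 / sqrt 2)"
  shows "(cmod (cnj s * z + cnj (1 * s) * y))^4
       + (cmod (cnj s * z + cnj (\<i> * s) * y))^4
       + (cmod (cnj s * z + cnj (-1 * s) * y))^4
       + (cmod (cnj s * z + cnj (-\<i> * s) * y))^4
     = ((cmod z)^2 + (cmod y)^2)^2 + 2 * (cmod z)^2 * (cmod y)^2"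
proof -
  have r: "4 * (1 / sqrt 2)^4 = (1::real)"
    by (simp add: power_divide) (metis power_mult numeral_times_numeral num_double real_sqrt_pow2 zero_le_numeral power2_eq_square mult_2 numeral_Bit0)
  show ?thesis unfolding s_def four_id_gen r by simp
qed

lemma norm_axis_c: "norm (axis i (1::complex)) = 1"
proof -
  have "ip (axis i (1::complex)) (axis i 1) = 1" by (simp add: ip_axis1)
  then show ?thesis unfolding ip_self by (simp flip: of_real_power)
qed

lemma sum_sq_unitary:
  fixes U :: "complex^'n::finite^'n"
  assumes "unitary_mat U" "norm b = 1"
  shows "(\<Sum>i\<in>UNIV. (cmod (bra_ket (axis i 1) U b))^2) = 1"
  unfolding bk_axis norm_sq_vec[symmetric] unitary_norm[OF assms(1)] assms(2) by simp

lemma int_prod: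
  fixes H :: "(complex^'n::finite^'n) measure"
  assumes H: "is_haar_measure H"
  shows "integrable H (\<lambda>U. (cmod (bra_ket a U b))^k * (cmod (bra_ket a' U b'))^l)"
proof (rule haar_int[OF H])
  show "continuous_on UNIV (\<lambda>U. (cmod (bra_ket a U b))^k * (cmod (bra_ket a' U b'))^l)"
    by (intro continuous_intros cont_bk)
  fix U :: "complex^'n^'n" assume U: "unitary_mat U"
  show "\<bar>(cmod (bra_ket a U b))^k * (cmod (bra_ket a' U b'))^l\<bar>
     \<le> (real CARD('n) * norm a * norm b)^k * (real CARD('n) * norm a' * norm b')^l"
    by (simp add: abs_mult power_abs, intro mult_mono power_mono bk_bound[OF U]) auto
qed

lemma int_pow:
  fixes H :: "(complex^'n::finite^'n) measure"
  assumes H: "is_haar_measure H"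
  shows "integrable H (\<lambda>U. (cmod (bra_ket a U b))^k)"
  using int_prod[OF H, of a b k a b 0] by simp

lemma first_moment:
  fixes H :: "(complex^'n::finite^'n) measure"
  assumes H: "is_haar_measure H" and na: "norm a = 1" and nb: "norm b = 1"
  shows "(\<integral>U. (cmod (bra_ket a U b))^2 \<partial>H) = 1 / real CARD('n)"
proof -
  interpret prob_space H using haar_facts[OF H] by simp
  define g where "g = (\<integral>U. (cmod (bra_ket a U b))^2 \<partial>H)"
  have "(\<integral>U. (\<Sum>i\<in>UNIV. (cmod (bra_ket (axis i 1) U b))^2) \<partial>H) = (\<integral>U. 1 \<partial>H)"
  proof (rule integral_cong_AE)
    show "(\<lambda>U. \<Sum>i\<in>UNIV. (cmod (bra_ket (axis i 1) U b))\<^sup>2) \<in> borel_measurable H"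
      by (rule haar_meas[OF H]) (intro continuous_intros cont_bk)
    show "AE U in H. (\<Sum>i\<in>UNIV. (cmod (bra_ket (axis i 1) U b))\<^sup>2) = 1"
      using haar_facts(3)[OF H] by eventually_elim (simp add: unitary_group_def sum_sq_unitary nb)
  qed simp
  also have "\<dots> = 1" by (simp add: prob_space)
  finally have 1: "(\<integral>U. (\<Sum>i\<in>UNIV. (cmod (bra_ket (axis i 1) U b))^2) \<partial>H) = 1" .
  have "(\<integral>U. (\<Sum>i\<in>UNIV. (cmod (bra_ket (axis i 1) U b))^2) \<partial>H)
      = (\<Sum>i\<in>UNIV. (\<integral>U. (cmod (bra_ket (axis i 1) U b))^2 \<partial>H))"
    by (rule Bochner_Integration.integral_sum[where f="\<lambda>i U. (cmod (bra_ket (axis i 1) U b))^2"]) (rule int_pow[OF H])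
  also have "\<dots> = (\<Sum>i\<in>(UNIV::'n set). g)"
    unfolding g_def by (intro sum.cong refl moment_inv[OF H norm_axis_c na])
  finally have "real CARD('n) * g = 1" using 1 by simp
  then show ?thesis unfolding g_def[symmetric] by (simp add: field_simps)
qed

lemma second_moment:
  fixes H :: "(complex^'n::finite^'n) measure"
  assumes H: "is_haar_measure H" and na: "norm a = 1" and nb: "norm b = 1"
  shows "(\<integral>U. (cmod (bra_ket a U b))^4 \<partial>H) \<le> 2 / (real CARD('n))^2"
proof -
  interpret prob_space H using haar_facts[OF H] by simp
  obtain p :: 'n where True by blast
  define e :: "'n \<Rightarrow> complex^'n" where "e i = axis i 1" for i
  define m where "m = (\<integral>U. (cmod (bra_ket a U b))^4 \<partial>H)"
  have ne: "norm (e i) = 1" for i unfolding e_def by (rule norm_axis_c)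
  have m_e: "(\<integral>U. (cmod (bra_ket (e i) U b))^4 \<partial>H) = m" for i
    unfolding m_def by (rule moment_inv[OF H ne na])
  have pair: "(\<integral>U. (cmod (bra_ket (e p) U b))^2 * (cmod (bra_ket (e j) U b))^2 \<partial>H) = m / 2" if jp: "j \<noteq> p" for j
  proof -
    define s where "s = complex_of_real (1 / sqrt 2)"
    define v where "v \<omega> = s *s e p + (\<omega> * s) *s e j" for \<omega>
    have ss: "cnj s * s = 1/2" unfolding s_def
      by (simp flip: of_real_mult)
    have epj: "ip (e p) (e j) = 0" "ip (e j) (e p) = 0" using jp by (simp_all add: e_def ip_axis1, simp_all add: axis_def)
    have epp: "ip (e i) (e i) = 1" for i by (simp add: e_def ip_axis1)
    have nv: "norm (v \<omega>) = 1" if "cmod \<omega> = 1" for \<omega>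
    proof -
      have oo: "cnj \<omega> * \<omega> = 1" using that by (metis complex_norm_square mult.commute of_real_1 power_one)
      have "ip (v \<omega>) (v \<omega>) = cnj s * s + cnj (\<omega> * s) * (\<omega> * s)"
        unfolding v_def ip_add1 ip_add2 ip_smult1 ip_smult2 epj epp by simp
      also have "\<dots> = cnj s * s * (1 + cnj \<omega> * \<omega>)" by (simp add: algebra_simps)
      also have "\<dots> = 1" unfolding ss oo by simp
      finally have "of_real ((norm (v \<omega>))^2) = (1::complex)" unfolding ip_self .
      then have "(norm (v \<omega>))^2 = 1" by (metis of_real_eq_1_iff)
      then show ?thesis by (metis norm_ge_zero power2_eq_1_iff neg_0_le_iff_le le_minus_one_simps(3) order.trans)
    qed
    have bkv: "bra_ket (v \<omega>) U b = cnj s * bra_ket (e p) U b + cnj (\<omega> * s) * bra_ket (e j) U b" for \<omega> U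
      unfolding v_def bra_ket_ip ip_add1 ip_smult1 ..
    define F where "F \<omega> U = (cmod (bra_ket (v \<omega>) U b))^4" for \<omega> U
    have intF: "integrable H (F \<omega>)" for \<omega> unfolding F_def by (rule int_pow[OF H])
    have mF: "integral\<^sup>L H (F \<omega>) = m" if "cmod \<omega> = 1" for \<omega>
      unfolding F_def m_def by (rule moment_inv[OF H nv[OF that] na])
    have pt: "F 1 U + F \<i> U + F (-1) U + F (-\<i>) U =
        (cmod (bra_ket (e p) U b))^4 + (cmod (bra_ket (e j) U b))^4
          + 4 * ((cmod (bra_ket (e p) U b))^2 * (cmod (bra_ket (e j) U b))^2)" for U
    proof -
      have "F 1 U + F \<i> U + F (-1) U + F (-\<i>) U =
         ((cmod (bra_ket (e p) U b))^2 + (cmod (bra_ket (e j) U b))^2)^2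
          + 2 * (cmod (bra_ket (e p) U b))^2 * (cmod (bra_ket (e j) U b))^2"
        unfolding F_def bkv s_def four_id ..
      then show ?thesis by (simp add: power2_eq_square power4_eq_xxxx algebra_simps)
    qed
    have "4 * m = integral\<^sup>L H (F 1) + integral\<^sup>L H (F \<i>) + integral\<^sup>L H (F (-1)) + integral\<^sup>L H (F (-\<i>))"
      by (simp add: mF)
    also have "\<dots> = (\<integral>U. F 1 U + F \<i> U + F (-1) U + F (-\<i>) U \<partial>H)"
      by (simp add: Bochner_Integration.integral_add intF)
    also have "\<dots> = (\<integral>U. (cmod (bra_ket (e p) U b))^4 + (cmod (bra_ket (e j) U b))^4
          + 4 * ((cmod (bra_ket (e p) U b))^2 * (cmod (bra_ket (e j) U b))^2) \<partial>H)"
      unfolding pt ..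
    also have "\<dots> = m + m + 4 * (\<integral>U. (cmod (bra_ket (e p) U b))^2 * (cmod (bra_ket (e j) U b))^2 \<partial>H)"
      by (simp add: Bochner_Integration.integral_add int_pow[OF H] int_prod[OF H] m_e)
    finally show ?thesis by simp
  qed
  have "(\<integral>U. (\<Sum>j\<in>UNIV. (cmod (bra_ket (e p) U b))^2 * (cmod (bra_ket (e j) U b))^2) \<partial>H)
      = (\<integral>U. (cmod (bra_ket (e p) U b))^2 \<partial>H)"
  proof (rule integral_cong_AE)
    show "(\<lambda>U. \<Sum>j\<in>UNIV. (cmod (bra_ket (e p) U b))^2 * (cmod (bra_ket (e j) U b))^2) \<in> borel_measurable H"
      by (rule haar_meas[OF H]) (intro continuous_intros cont_bk)
    show "(\<lambda>U. (cmod (bra_ket (e p) U b))^2) \<in> borel_measurable H"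
      by (rule haar_meas[OF H]) (intro continuous_intros cont_bk)
    show "AE U in H. (\<Sum>j\<in>UNIV. (cmod (bra_ket (e p) U b))^2 * (cmod (bra_ket (e j) U b))^2)
       = (cmod (bra_ket (e p) U b))^2"
      using haar_facts(3)[OF H] by eventually_elim
        (simp add: unitary_group_def sum_distrib_left[symmetric] e_def sum_sq_unitary nb)
  qed
  also have "\<dots> = 1 / real CARD('n)" by (rule first_moment[OF H ne nb])
  finally have S1: "(\<integral>U. (\<Sum>j\<in>UNIV. (cmod (bra_ket (e p) U b))^2 * (cmod (bra_ket (e j) U b))^2) \<partial>H)
     = 1 / real CARD('n)" .
  have "(\<integral>U. (\<Sum>j\<in>UNIV. (cmod (bra_ket (e p) U b))^2 * (cmod (bra_ket (e j) U b))^2) \<partial>H)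
      = (\<Sum>j\<in>UNIV. (\<integral>U. (cmod (bra_ket (e p) U b))^2 * (cmod (bra_ket (e j) U b))^2 \<partial>H))"
    by (rule Bochner_Integration.integral_sum[where f="\<lambda>j U. (cmod (bra_ket (e p) U b))^2 * (cmod (bra_ket (e j) U b))^2"])
       (rule int_prod[OF H])
  also have "\<dots> = (\<integral>U. (cmod (bra_ket (e p) U b))^2 * (cmod (bra_ket (e p) U b))^2 \<partial>H)
      + (\<Sum>j\<in>UNIV - {p}. (\<integral>U. (cmod (bra_ket (e p) U b))^2 * (cmod (bra_ket (e j) U b))^2 \<partial>H))"
    by (rule sum.remove) auto
  also have "\<dots> = m + (\<Sum>j\<in>UNIV - {p}. m / 2)"
  proof -
    have "(\<lambda>U. (cmod (bra_ket (e p) U b))^2 * (cmod (bra_ket (e p) U b))^2) = (\<lambda>U. (cmod (bra_ket (e p) U b))^4)"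
      by (simp flip: power_add)
    moreover have "(\<Sum>j\<in>UNIV - {p}. (\<integral>U. (cmod (bra_ket (e p) U b))^2 * (cmod (bra_ket (e j) U b))^2 \<partial>H))
       = (\<Sum>j\<in>UNIV - {p}. m / 2)"
      by (rule sum.cong) (simp_all add: pair)
    ultimately show ?thesis using m_e by simp
  qed
  also have "\<dots> = m + (real CARD('n) - 1) * m / 2"
    by (simp add: card_Diff_singleton of_nat_diff)
  finally have eq: "m + (real CARD('n) - 1) * m / 2 = 1 / real CARD('n)" using S1 by simp
  have d1: "real CARD('n) \<ge> 1" by simp
  have m0: "m \<ge> 0" unfolding m_def by simp
  have "m * (real CARD('n) * (real CARD('n) + 1)) = 2" using eq d1 by (simp add: field_simps)
  then have "m * (real CARD('n))^2 \<le> 2" using m0 d1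
    by (smt (verit) mult_left_mono power2_eq_square distrib_left mult_nonneg_nonneg)
  then show ?thesis unfolding m_def[symmetric] using d1 by (simp add: field_simps)
qed

definition mP :: "('n \<times> 'n) list \<Rightarrow> complex^'n^'n \<Rightarrow> complex" where
  "mP a U = prod_list (map (\<lambda>x. U $ fst x $ snd x) a)"
definition mQ :: "('n \<times> 'n) list \<Rightarrow> complex^'n^'n \<Rightarrow> complex" where
  "mQ a U = prod_list (map (\<lambda>x. cnj (U $ fst x $ snd x)) a)"

lemma prod_nth: "length xs = t \<Longrightarrow> (\<Prod>k<t. f (xs!k)) = prod_list (map f xs)"
proof (induction xs arbitrary: t)
  case (Cons x xs)
  then show ?case by (auto simp del: prod.lessThan_Suc simp add: prod.lessThan_Suc_shift)
qed simp

lemma finite_L: "finite {xs :: ('n::finite \<times> 'n) list. length xs = t}"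
  using finite_lists_length_eq[of "UNIV :: ('n \<times> 'n) set" t] by simp

lemma bihom_alt:
  fixes f :: "complex^'n::finite^'n \<Rightarrow> complex"
  shows "bihom_poly t f \<longleftrightarrow> (\<exists>c. f = (\<lambda>U. \<Sum>a\<in>{xs. length xs = t}. \<Sum>b\<in>{xs. length xs = t}.
     c a b * mP a U * mQ b U))"
proof -
  have "(\<Sum>a\<in>{xs. length xs = t}. \<Sum>b\<in>{xs. length xs = t}.
               c a b * (\<Prod>k<t. U $ fst (a!k) $ snd (a!k))
                     * (\<Prod>k<t. cnj (U $ fst (b!k) $ snd (b!k))))
       = (\<Sum>a\<in>{xs. length xs = t}. \<Sum>b\<in>{xs. length xs = t}. c a b * mP a U * mQ b U)" for c and U :: "complex^'n^'n"
    by (intro sum.cong refl) (simp add: mP_def mQ_def prod_nth[where f="\<lambda>x. U $ fst x $ snd x" for U]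
         prod_nth[where f="\<lambda>x. cnj (U $ fst x $ snd x)" for U])
  then show ?thesis unfolding bihom_poly_def by simp
qed

lemma bh_add:
  assumes "bihom_poly t f" "bihom_poly t g" shows "bihom_poly t (\<lambda>U. f U + g U)"
proof -
  obtain c where c: "f = (\<lambda>U. \<Sum>a\<in>{xs. length xs = t}. \<Sum>b\<in>{xs. length xs = t}. c a b * mP a U * mQ b U)"
    using assms(1) unfolding bihom_alt by blast
  obtain d where d: "g = (\<lambda>U. \<Sum>a\<in>{xs. length xs = t}. \<Sum>b\<in>{xs. length xs = t}. d a b * mP a U * mQ b U)"
    using assms(2) unfolding bihom_alt by blast
  show ?thesis unfolding bihom_alt c d
    by (intro exI[of _ "\<lambda>a b. c a b + d a b"]) (simp add: sum.distrib algebra_simps)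
qed

lemma bh_scale:
  assumes "bihom_poly t f" shows "bihom_poly t (\<lambda>U. r * f U)"
proof -
  obtain c where c: "f = (\<lambda>U. \<Sum>a\<in>{xs. length xs = t}. \<Sum>b\<in>{xs. length xs = t}. c a b * mP a U * mQ b U)"
    using assms(1) unfolding bihom_alt by blast
  show ?thesis unfolding bihom_alt c
    by (intro exI[of _ "\<lambda>a b. r * c a b"]) (simp add: sum_distrib_left algebra_simps)
qed

lemma bh_zero: "bihom_poly t (\<lambda>U. 0)"
  unfolding bihom_alt by (intro exI[of _ "\<lambda>a b. 0"]) simp

lemma bh_sum:
  assumes "finite S" "\<And>i. i \<in> S \<Longrightarrow> bihom_poly t (f i)"
  shows "bihom_poly t (\<lambda>U. \<Sum>i\<in>S. f i U)"
  using assms by (induction S rule: finite_induct) (auto intro: bh_add bh_zero)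

lemma bh_const: "bihom_poly 0 (\<lambda>U. r)"
  unfolding bihom_alt by (intro exI[of _ "\<lambda>a b. r"]) (simp add: mP_def mQ_def)

lemma sum_delta2:
  "(\<Sum>x\<in>(UNIV::'a::finite set). \<Sum>y\<in>(UNIV::'b::finite set). if x = a \<and> y = b then v else (0::'c::comm_monoid_add)) = v"
proof -
  have "(\<Sum>y\<in>(UNIV::'b set). if x = a \<and> y = b then v else (0::'c)) = (if x = a then v else 0)" for x
    by (cases "x = a") simp_all
  then show ?thesis by simp
qed

lemma bh_entry: "bihom_poly 1 (\<lambda>U. U$i$j * cnj (U$k$l))"
proof -
  have L1: "{xs :: ('n \<times> 'n) list. length xs = 1} = (\<lambda>x. [x]) ` UNIV"
    by (auto simp: length_Suc_conv)
  have inj: "inj (\<lambda>x::'n \<times> 'n. [x])" by (simp add: inj_def)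
  show ?thesis unfolding bihom_alt L1 sum.reindex[OF inj]
    by (intro exI[of _ "\<lambda>a b. if a = [(i,j)] \<and> b = [(k,l)] then 1 else 0"])
       (simp add: mP_def mQ_def if_distrib[of "\<lambda>x. x * _"] sum_delta2 cong: if_cong)
qed

lemma split_sum:
  "(\<Sum>A\<in>{xs :: 'a::finite list. length xs = p + q}. h A)
     = (\<Sum>a\<in>{xs. length xs = p}. \<Sum>a'\<in>{xs. length xs = q}. h (a @ a'))"
proof -
  have bij: "bij_betw (\<lambda>(a,a'). a @ a') ({xs :: 'a list. length xs = p} \<times> {xs. length xs = q}) {xs. length xs = p+q}"
  proof (rule bij_betwI')
    fix x y :: "'a list \<times> 'a list"
    assume "x \<in> {xs. length xs = p} \<times> {xs. length xs = q}" "y \<in> {xs. length xs = p} \<times> {xs. length xs = q}"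
    then show "((case x of (a, a') \<Rightarrow> a @ a') = (case y of (a, a') \<Rightarrow> a @ a')) = (x = y)"
      by (cases x, cases y) auto
  next
    fix x :: "'a list \<times> 'a list"
    assume "x \<in> {xs. length xs = p} \<times> {xs. length xs = q}"
    then show "(case x of (a, a') \<Rightarrow> a @ a') \<in> {xs. length xs = p + q}" by (cases x) auto
  next
    fix y :: "'a list" assume "y \<in> {xs. length xs = p + q}"
    then show "\<exists>x\<in>{xs. length xs = p} \<times> {xs. length xs = q}. y = (case x of (a, a') \<Rightarrow> a @ a')"
      by (intro bexI[of _ "(take p y, drop p y)"]) auto
  qed
  have "(\<Sum>A\<in>{xs :: 'a list. length xs = p + q}. h A)
      = (\<Sum>x\<in>{xs :: 'a list. length xs = p} \<times> {xs. length xs = q}. h (case x of (a, a') \<Rightarrow> a @ a'))"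
    by (rule sum.reindex_bij_betw[OF bij, symmetric])
  also have "\<dots> = (\<Sum>a\<in>{xs. length xs = p}. \<Sum>a'\<in>{xs. length xs = q}. h (a @ a'))"
    by (subst sum.cartesian_product) (simp add: case_prod_beta')
  finally show ?thesis .
qed

lemma mP_append: "mP (a @ a') U = mP a U * mP a' U" by (simp add: mP_def)
lemma mQ_append: "mQ (a @ a') U = mQ a U * mQ a' U" by (simp add: mQ_def)

lemma bh_mult:
  fixes f g :: "complex^'n::finite^'n \<Rightarrow> complex"
  assumes "bihom_poly p f" "bihom_poly q g"
  shows "bihom_poly (p + q) (\<lambda>U. f U * g U)"
proof -
  let ?L = "\<lambda>n. {xs :: ('n \<times> 'n) list. length xs = n}"
  obtain c where c: "f = (\<lambda>U. \<Sum>a\<in>?L p. \<Sum>b\<in>?L p. c a b * mP a U * mQ b U)"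
    using assms(1) unfolding bihom_alt by blast
  obtain d where d: "g = (\<lambda>U. \<Sum>a\<in>?L q. \<Sum>b\<in>?L q. d a b * mP a U * mQ b U)"
    using assms(2) unfolding bihom_alt by blast
  define C where "C A B = c (take p A) (take p B) * d (drop p A) (drop p B)" for A B :: "('n \<times> 'n) list"
  have "f U * g U = (\<Sum>A\<in>?L (p+q). \<Sum>B\<in>?L (p+q). C A B * mP A U * mQ B U)" for U
  proof -
    have "(\<Sum>A\<in>?L (p+q). \<Sum>B\<in>?L (p+q). C A B * mP A U * mQ B U)
       = (\<Sum>a\<in>?L p. \<Sum>a'\<in>?L q. \<Sum>b\<in>?L p. \<Sum>b'\<in>?L q. C (a@a') (b@b') * mP (a@a') U * mQ (b@b') U)"
      unfolding split_sum ..
    also have "\<dots> = (\<Sum>a\<in>?L p. \<Sum>a'\<in>?L q. \<Sum>b\<in>?L p. \<Sum>b'\<in>?L q.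
          (c a b * mP a U * mQ b U) * (d a' b' * mP a' U * mQ b' U))"
      by (intro sum.cong refl) (simp add: C_def mP_append mQ_append mult_ac)
    also have "\<dots> = (\<Sum>a\<in>?L p. \<Sum>b\<in>?L p. \<Sum>a'\<in>?L q. \<Sum>b'\<in>?L q.
          (c a b * mP a U * mQ b U) * (d a' b' * mP a' U * mQ b' U))"
      by (rule sum.cong[OF refl]) (rule sum.swap)
    also have "\<dots> = f U * g U"
      unfolding c d by (simp only: sum_distrib_right, simp only: sum_distrib_left)
    finally show ?thesis by simp
  qed
  then show ?thesis unfolding bihom_alt by (intro exI[of _ C]) (rule ext)
qed

lemma bh_pow:
  fixes f :: "complex^'n::finite^'n \<Rightarrow> complex"
  assumes "bihom_poly p f"
  shows "bihom_poly (p * n) (\<lambda>U. f U ^ n)"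
proof (induction n)
  case 0 then show ?case using bh_const[of 1] by simp
next
  case (Suc n)
  have "bihom_poly (p + p * n) (\<lambda>U. f U * f U ^ n)" by (rule bh_mult[OF assms Suc])
  then show ?case by (simp add: add.commute)
qed

lemma bh_bk: "bihom_poly 1 (\<lambda>U::complex^'n::finite^'n. bra_ket a U b * cnj (bra_ket a U b))"
proof -
  have e: "bra_ket a U b * cnj (bra_ket a U b) = (\<Sum>i\<in>UNIV. \<Sum>k\<in>UNIV. \<Sum>j\<in>UNIV. \<Sum>l\<in>UNIV.
     (cnj (a$i) * b$j * a$k * cnj (b$l)) * (U$i$j * cnj (U$k$l)))" for U :: "complex^'n^'n"
  proof -
    have 1: "bra_ket a U b = (\<Sum>i\<in>UNIV. \<Sum>j\<in>UNIV. cnj (a$i) * b$j * U$i$j)"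
      by (simp add: bra_ket_def matrix_vector_mult_def sum_distrib_left mult_ac)
    have 2: "cnj (bra_ket a U b) = (\<Sum>k\<in>UNIV. \<Sum>l\<in>UNIV. a$k * cnj (b$l) * cnj (U$k$l))"
      unfolding 1 by (simp add: mult_ac)
    show ?thesis unfolding 2 unfolding 1 sum_product by (simp add: mult_ac)
  qed
  show ?thesis unfolding e by (intro bh_sum finite bh_scale bh_entry)
qed

lemma bh_N: "bihom_poly 1 (\<lambda>U::complex^'n::finite^'n. \<Sum>i\<in>UNIV. \<Sum>j\<in>UNIV. U$i$j * cnj (U$i$j))"
  by (intro bh_sum finite bh_entry)

lemma col_nth: "(U *v axis j (1::complex)) $ i = U$i$j"
proof -
  have h: "(\<lambda>k. U$i$k * axis j 1 $ k) = (\<lambda>k. if k = j then U$i$j else 0)" by (auto simp: axis_def)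
  show ?thesis by (simp only: matrix_vector_mult_def vec_lambda_beta h) simp
qed

lemma Nr_unitary:
  fixes U :: "complex^'n::finite^'n"
  assumes "unitary_mat U"
  shows "(\<Sum>i\<in>UNIV. \<Sum>j\<in>UNIV. (cmod (U$i$j))^2) = real CARD('n)"
proof -
  have "(\<Sum>i\<in>UNIV. (cmod (U$i$j))^2) = 1" for j
    using norm_sq_vec[of "U *v axis j 1"] unitary_norm[OF assms, of "axis j 1"] norm_axis_c[of j]
    by (simp add: col_nth)
  then have "(\<Sum>j\<in>(UNIV::'n set). \<Sum>i\<in>UNIV. (cmod (U$i$j))^2) = real CARD('n)" by simp
  then show ?thesis by (subst sum.swap)
qed

lemma final_arith:
  fixes d \<epsilon> \<gamma> P E1 E2 :: real
  assumes d: "d > 0" and e0: "0 \<le> \<epsilon>" and e1: "\<epsilon> < 1" and g0: "0 \<le> \<gamma>" and g1: "\<gamma> \<le> 1 - \<epsilon>"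
    and P0: "P \<ge> 0" and E1: "E1 \<ge> (1 - \<epsilon>) / d" and E2: "E2 \<le> (1 + \<epsilon>) * (2 / d^2)"
    and PZ: "\<And>l. l > 0 \<Longrightarrow> E1 \<le> (E2 / l + l * P) / 2 + \<gamma> / d"
  shows "P \<ge> (1 - \<epsilon> - \<gamma>)^2 / (2 * (1 + \<epsilon>))"
proof (cases "\<gamma> = 1 - \<epsilon>")
  case True
  then show ?thesis using P0 by simp
next
  case False
  define L where "L = (1 - \<epsilon> - \<gamma>) / d"
  define Q where "Q = (1 + \<epsilon>) * (2 / d^2)"
  have L0: "L > 0" using False g1 d unfolding L_def by simp
  have Q0: "Q > 0" using d e0 unfolding Q_def by simp
  define l where "l = Q / L"
  have l0: "l > 0" using L0 Q0 unfolding l_def by simp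
  have "E2 / l \<le> Q / l" using E2 l0 unfolding Q_def[symmetric] by (intro divide_right_mono) auto
  also have "Q / l = L" unfolding l_def using L0 Q0 by simp
  finally have a: "E2 / l \<le> L" .
  have "L + \<gamma> / d \<le> E1" using E1 d unfolding L_def by (simp add: field_simps)
  then have "L \<le> (E2 / l + l * P) / 2" using PZ[OF l0] by linarith
  then have "2 * L \<le> E2 / l + l * P" by simp
  then have "L \<le> l * P" using a by linarith
  then have "L * L \<le> Q * P" unfolding l_def using L0
    by (simp add: field_simps)
  then have "L * L / Q \<le> P" using Q0 by (simp add: field_simps)
  moreover have "L * L / Q = (1 - \<epsilon> - \<gamma>)^2 / (2 * (1 + \<epsilon>))"
  proof -
    have "((1 - \<epsilon> - \<gamma>) / d) * ((1 - \<epsilon> - \<gamma>) / d) = (1 - \<epsilon> - \<gamma>)^2 / d^2" by (simp add: power2_eq_square)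
    moreover have "(1 + \<epsilon>) * (2 / d^2) = (2 * (1 + \<epsilon>)) / d^2" by simp
    ultimately show ?thesis unfolding L_def Q_def using d by simp
  qed
  ultimately show ?thesis by simp
qed

lemma cns: "(complex_of_real (cmod z))^2 = z * cnj z"
  by (metis complex_norm_square of_real_power)

theorem lemma2:
  fixes H :: "(complex^'n::finite^'n) measure"
    and D :: "(complex^'n^'n) pmf"
    and \<alpha> \<beta> :: "complex^'n"
    and t :: nat and \<epsilon> \<gamma> :: real
  assumes "CARD('n) \<ge> 2"
    and "t \<ge> 2"
    and "0 \<le> \<epsilon>" and "\<epsilon> < 1"
    and "is_haar_measure H"
    and "approx_design H \<epsilon> t D"
    and "norm \<alpha> = 1" and "norm \<beta> = 1"
    and "0 \<le> \<gamma>" and "\<gamma> \<le> 1 - \<epsilon>"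
  shows "measure_pmf.prob D {U. (cmod (bra_ket \<alpha> U \<beta>))^2 > \<gamma> / real CARD('n)}
           \<ge> (1 - \<epsilon> - \<gamma>)^2 / (2 * (1 + \<epsilon>))"
proof -
  note H = assms(5)
  define d where "d = real CARD('n)"
  have d0: "d > 0" unfolding d_def by simp
  then have dn: "d \<noteq> 0" by simp
  define X where "X U = (cmod (bra_ket \<alpha> U \<beta>))^2" for U
  define Nr where "Nr U = (\<Sum>i\<in>UNIV. \<Sum>j\<in>UNIV. (cmod (U$i$j))^2)" for U :: "complex^'n^'n"
  define N where "N U = (\<Sum>i\<in>UNIV. \<Sum>j\<in>UNIV. U$i$j * cnj (U$i$j))" for U :: "complex^'n^'n"
  define f1 where "f1 U = complex_of_real (X U * (Nr U / d)^(t-1))" for U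
  define f2 where "f2 U = complex_of_real ((X U)^2 * (Nr U / d)^(t-2))" for U
  have X0: "X U \<ge> 0" for U unfolding X_def by simp
  have Nr0: "Nr U \<ge> 0" for U unfolding Nr_def by (intro sum_nonneg) simp
  have cX: "complex_of_real (X U) = bra_ket \<alpha> U \<beta> * cnj (bra_ket \<alpha> U \<beta>)" for U
    unfolding X_def complex_norm_square ..
  have cN: "complex_of_real (Nr U / d) = of_real (1/d) * N U" for U
    unfolding Nr_def N_def by (simp add: of_real_sum cns)
  have Nd: "Nr U = d" if "U \<in> unitary_group" for U
    using Nr_unitary that unfolding Nr_def d_def unitary_group_def by simp
  have bh1: "bihom_poly t f1"
  proof -
    have "f1 = (\<lambda>U. (bra_ket \<alpha> U \<beta> * cnj (bra_ket \<alpha> U \<beta>)) * (of_real (1/d) * N U)^(t-1))"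
      by (rule ext) (simp only: f1_def of_real_mult of_real_power cX cN)
    moreover have "bihom_poly (1 + 1 * (t-1)) (\<lambda>U. (bra_ket \<alpha> U \<beta> * cnj (bra_ket \<alpha> U \<beta>)) * (of_real (1/d) * N U)^(t-1))"
      unfolding N_def by (intro bh_mult bh_bk bh_pow bh_scale bh_N)
    moreover have "1 + 1 * (t-1) = t" using assms(2) by simp
    ultimately show ?thesis by simp
  qed
  have bh2: "bihom_poly t f2"
  proof -
    have "f2 = (\<lambda>U. (bra_ket \<alpha> U \<beta> * cnj (bra_ket \<alpha> U \<beta>))^2 * (of_real (1/d) * N U)^(t-2))"
      by (rule ext) (simp only: f2_def of_real_mult of_real_power cX cN)
    moreover have "bihom_poly (1 * 2 + 1 * (t-2)) (\<lambda>U. (bra_ket \<alpha> U \<beta> * cnj (bra_ket \<alpha> U \<beta>))^2 * (of_real (1/d) * N U)^(t-2))"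
      unfolding N_def by (intro bh_mult bh_bk bh_pow bh_scale bh_N)
    moreover have "1 * 2 + 1 * (t-2) = t" using assms(2) by simp
    ultimately show ?thesis by simp
  qed
  have Re1: "Re (f1 U) = X U * (Nr U / d)^(t-1)" for U by (simp add: f1_def)
  have Re2: "Re (f2 U) = (X U)^2 * (Nr U / d)^(t-2)" for U by (simp add: f2_def)
  have pos1: "\<forall>U\<in>unitary_group. f1 U \<in> \<real> \<and> 0 \<le> Re (f1 U)"
    unfolding Re1 using X0 Nr0 d0 by (auto simp: f1_def)
  have pos2: "\<forall>U\<in>unitary_group. f2 U \<in> \<real> \<and> 0 \<le> Re (f2 U)"
    unfolding Re2 using X0 Nr0 d0 by (auto simp: f2_def)
  have supp: "set_pmf D \<subseteq> unitary_group" using assms(6) unfolding approx_design_def by blast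
  have des: "\<And>f. bihom_poly t f \<Longrightarrow> (\<forall>U\<in>unitary_group. f U \<in> \<real> \<and> 0 \<le> Re (f U)) \<Longrightarrow>
        (1 - \<epsilon>) * (\<integral>U. Re (f U) \<partial>H) \<le> measure_pmf.expectation D (\<lambda>U. Re (f U)) \<and>
        measure_pmf.expectation D (\<lambda>U. Re (f U)) \<le> (1 + \<epsilon>) * (\<integral>U. Re (f U) \<partial>H)"
    using assms(6) unfolding approx_design_def by blast
  note D1 = des[OF bh1 pos1, THEN conjunct1]
  note D2 = des[OF bh2 pos2, THEN conjunct2]
  have contNr: "continuous_on UNIV Nr" unfolding Nr_def by (intro continuous_intros)
  have contX: "continuous_on UNIV X" unfolding X_def by (intro continuous_intros cont_bk)
  have H1: "(\<integral>U. Re (f1 U) \<partial>H) = 1 / d"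
  proof -
    have "(\<integral>U. Re (f1 U) \<partial>H) = (\<integral>U. X U \<partial>H)"
    proof (rule integral_cong_AE)
      show "(\<lambda>U. Re (f1 U)) \<in> borel_measurable H" unfolding Re1
        by (rule haar_meas[OF H]) (intro continuous_intros contX contNr, use d0 in auto)
      show "X \<in> borel_measurable H" by (rule haar_meas[OF H contX])
      show "AE U in H. Re (f1 U) = X U"
        using haar_facts(3)[OF H] by eventually_elim (simp add: Re1 Nd dn)
    qed
    also have "\<dots> = 1 / d" unfolding X_def d_def by (rule first_moment[OF H assms(7,8)])
    finally show ?thesis .
  qed
  have H2: "(\<integral>U. Re (f2 U) \<partial>H) \<le> 2 / d^2"
  proof -
    have "(\<integral>U. Re (f2 U) \<partial>H) = (\<integral>U. (cmod (bra_ket \<alpha> U \<beta>))^4 \<partial>H)"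
    proof (rule integral_cong_AE)
      show "(\<lambda>U. Re (f2 U)) \<in> borel_measurable H" unfolding Re2
        by (rule haar_meas[OF H]) (intro continuous_intros contX contNr, use d0 in auto)
      show "(\<lambda>U. (cmod (bra_ket \<alpha> U \<beta>))^4) \<in> borel_measurable H"
        by (rule haar_meas[OF H]) (intro continuous_intros cont_bk)
      show "AE U in H. Re (f2 U) = (cmod (bra_ket \<alpha> U \<beta>))^4"
        using haar_facts(3)[OF H] by eventually_elim (simp add: Re2 Nd dn X_def flip: power_mult)
    qed
    also have "\<dots> \<le> 2 / d^2" unfolding d_def by (rule second_moment[OF H assms(7,8)])
    finally show ?thesis .
  qed
  have Xb: "X U \<le> d^2" if "U \<in> set_pmf D" for U
  proof -
    have "cmod (bra_ket \<alpha> U \<beta>) \<le> d" using bk_bound[of U \<alpha> \<beta>] supp that assms(7,8)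
      unfolding unitary_group_def d_def by auto
    then show ?thesis unfolding X_def by (intro power_mono) auto
  qed
  have intX: "integrable (measure_pmf D) X"
    by (rule measure_pmf.integrable_const_bound[where B="d^2"]) (auto intro!: AE_pmfI simp: Xb X0)
  have Xb2: "(X U)^2 \<le> d^4" if "U \<in> set_pmf D" for U
    using power_mono[OF Xb[OF that] X0[of U], of 2] by simp
  have intX2: "integrable (measure_pmf D) (\<lambda>U. (X U)^2)"
    by (rule measure_pmf.integrable_const_bound[where B="d^4"]) (auto intro!: AE_pmfI simp: Xb2)
  have E1: "measure_pmf.expectation D (\<lambda>U. Re (f1 U)) = measure_pmf.expectation D X"
    by (rule integral_cong_AE) (auto intro!: AE_pmfI simp: Re1 Nd dn supp[THEN subsetD])
  have E2: "measure_pmf.expectation D (\<lambda>U. Re (f2 U)) = measure_pmf.expectation D (\<lambda>U. (X U)^2)"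
    by (rule integral_cong_AE) (auto intro!: AE_pmfI simp: Re2 Nd dn supp[THEN subsetD])
  define A where "A = {U. (cmod (bra_ket \<alpha> U \<beta>))^2 > \<gamma> / real CARD('n)}"
  have A: "A = {U. X U > \<gamma> / d}" unfolding A_def X_def d_def ..
  define P where "P = measure_pmf.prob D A"
  have PZ: "measure_pmf.expectation D X \<le> (measure_pmf.expectation D (\<lambda>U. (X U)^2) / l + l * P) / 2 + \<gamma> / d"
    if l0: "l > 0" for l
  proof -
    have pt: "X U \<le> ((X U)^2 / l + l * indicator A U) / 2 + \<gamma> / d" for U
    proof (cases "U \<in> A")
      case True
      have "0 \<le> (X U - l)^2 / l" using l0 by simp
      then have "2 * X U \<le> (X U)^2 / l + l" using l0 by (simp add: power2_eq_square field_simps)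
      then have a: "X U \<le> ((X U)^2 / l + l * indicator A U) / 2" using True by simp
      have b: "0 \<le> \<gamma> / d" using assms(9) d0 by simp
      define Y where "Y = ((X U)^2 / l + l * indicator A U) / 2"
      have "X U \<le> Y" "0 \<le> \<gamma> / d" using a b unfolding Y_def by auto
      then have "X U \<le> Y + \<gamma> / d" by linarith
      then show ?thesis unfolding Y_def .
    next
      case False
      then have "X U \<le> \<gamma> / d" unfolding A by simp
      moreover have "0 \<le> ((X U)^2 / l + l * indicator A U) / 2" using l0 False by simp
      ultimately show ?thesis by linarith
    qed
    have intI: "integrable (measure_pmf D) (indicator A :: _ \<Rightarrow> real)"
      by (rule measure_pmf.integrable_const_bound[where B=1]) (auto simp: indicator_def)
    have "measure_pmf.expectation D X \<le>
        measure_pmf.expectation D (\<lambda>U. ((X U)^2 / l + l * indicator A U) / 2 + \<gamma> / d)"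
      by (rule integral_mono[OF intX _ pt]) (intro Bochner_Integration.integrable_add integrable_divide
           integrable_mult_right intX2 intI measure_pmf.integrable_const)
    also have "\<dots> = (measure_pmf.expectation D (\<lambda>U. (X U)^2) / l + l * P) / 2 + \<gamma> / d"
      using intX2 intI by (simp add: P_def Bochner_Integration.integral_add measure_pmf.prob_space)
    finally show ?thesis .
  qed
  have "P \<ge> (1 - \<epsilon> - \<gamma>)^2 / (2 * (1 + \<epsilon>))"
  proof (rule final_arith[OF d0 assms(3,4,9,10)])
    show "P \<ge> 0" unfolding P_def by simp
    show "measure_pmf.expectation D X \<ge> (1 - \<epsilon>) / d" using D1 unfolding H1 E1 by simp
    have "measure_pmf.expectation D (\<lambda>U. (X U)^2) \<le> (1 + \<epsilon>) * (\<integral>U. Re (f2 U) \<partial>H)"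
      using D2 unfolding E2 .
    also have "\<dots> \<le> (1 + \<epsilon>) * (2 / d^2)" using H2 assms(3) by (intro mult_left_mono) auto
    finally show "measure_pmf.expectation D (\<lambda>U. (X U)^2) \<le> (1 + \<epsilon>) * (2 / d^2)" .
  qed (rule PZ)
  then show ?thesis unfolding P_def A_def .
qed

end
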